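(* For $\alpha\in\mathbb{K}^\times$ let $A_{3,\alpha}$ be the evolution algebra over the field $\mathbb{K}$ with natural basis $\{e_1,e_2\}$ such that $e_1^2=e_1$ and $e_2^2=\alpha e_1+e_2$. For $\alpha,\alpha'\in\mathbb{K}^\times$, $A_{3,\alpha}$ is isomorphic to $A_{3,\alpha'}$ as a $\mathbb{K}$-algebra if and only if $\alpha=\alpha'$.
   Context: An evolution algebra over $\mathbb{K}$ is a $\mathbb{K}$-algebra with a basis $\{e_i\}$ (natural basis) such that $e_ie_j=0$ for $i\neq j$. *)

theory Defs
  imports Main
begin

text \<open>A 2-dimensional algebra over a field is modelled on the coordinate space
  'k \<times> 'k, the pair (x1, x2) standing for x1 e1 + x2 e2 in the natural basis.\<close>

definition vadd :: "'k::field \<times> 'k \<Rightarrow> 'k \<times> 'k \<Rightarrow> 'k \<times> 'k" where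
  "vadd x y = (fst x + fst y, snd x + snd y)"

definition vscale :: "'k::field \<Rightarrow> 'k \<times> 'k \<Rightarrow> 'k \<times> 'k" where
  "vscale c x = (c * fst x, c * snd x)"

definition e1 :: "'k::field \<times> 'k" where "e1 = (1, 0)"
definition e2 :: "'k::field \<times> 'k" where "e2 = (0, 1)"

text \<open>Evolution algebra with natural basis {e1, e2} and structure constants
  e1^2 = a11 e1 + a12 e2, e2^2 = a21 e1 + a22 e2, e1 e2 = e2 e1 = 0,
  extended bilinearly.\<close>
definition evo2_mult :: "'k::field \<Rightarrow> 'k \<Rightarrow> 'k \<Rightarrow> 'k \<Rightarrow> 'k \<times> 'k \<Rightarrow> 'k \<times> 'k \<Rightarrow> 'k \<times> 'k" where
  "evo2_mult a11 a12 a21 a22 x y =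
     (fst x * fst y * a11 + snd x * snd y * a21, fst x * fst y * a12 + snd x * snd y * a22)"

definition A3_mult :: "'k::field \<Rightarrow> 'k \<times> 'k \<Rightarrow> 'k \<times> 'k \<Rightarrow> 'k \<times> 'k" where
  "A3_mult \<alpha> = evo2_mult 1 0 \<alpha> 1"

definition alg_iso :: "('k::field \<times> 'k \<Rightarrow> 'k \<times> 'k \<Rightarrow> 'k \<times> 'k) \<Rightarrow> ('k \<times> 'k \<Rightarrow> 'k \<times> 'k \<Rightarrow> 'k \<times> 'k)
    \<Rightarrow> ('k \<times> 'k \<Rightarrow> 'k \<times> 'k) \<Rightarrow> bool" where
  "alg_iso M M' f \<longleftrightarrow> bij f
     \<and> (\<forall>x y. f (vadd x y) = vadd (f x) (f y))
     \<and> (\<forall>c x. f (vscale c x) = vscale c (f x))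
     \<and> (\<forall>x y. f (M x y) = M' (f x) (f y))"

lemma A3_basis: "A3_mult \<alpha> e1 e1 = e1" "A3_mult \<alpha> e2 e2 = vadd (vscale \<alpha> e1) e2"
  "A3_mult \<alpha> e1 e2 = (0,0)" "A3_mult \<alpha> e2 e1 = (0,0)"
  by (simp_all add: A3_mult_def evo2_mult_def e1_def e2_def vadd_def vscale_def)

end

theory Submission
  imports Defs
begin

theorem lemma3p4:
  fixes \<alpha> \<alpha>' :: "'k::field"
  assumes "\<alpha> \<noteq> 0" and "\<alpha>' \<noteq> 0"
  shows "(\<exists>f. alg_iso (A3_mult \<alpha>) (A3_mult \<alpha>') f) \<longleftrightarrow> \<alpha> = \<alpha>'"
proof
  assume "\<alpha> = \<alpha>'"
  then show "\<exists>f. alg_iso (A3_mult \<alpha>) (A3_mult \<alpha>') f"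
    by (intro exI[of _ id]) (simp add: alg_iso_def)
next
  assume "\<exists>f. alg_iso (A3_mult \<alpha>) (A3_mult \<alpha>') f"
  then obtain f where iso: "alg_iso (A3_mult \<alpha>) (A3_mult \<alpha>') f" by blast
  have bij: "bij f" and add: "\<And>x y. f (vadd x y) = vadd (f x) (f y)"
    and sc: "\<And>c x. f (vscale c x) = vscale c (f x)"
    and mu: "\<And>x y. f (A3_mult \<alpha> x y) = A3_mult \<alpha>' (f x) (f y)"
    using iso unfolding alg_iso_def by blast+
  obtain a b where fe1: "f e1 = (a, b)" by (cases "f e1")
  obtain c d where fe2: "f e2 = (c, d)" by (cases "f e2")
  have lin: "f (x1, x2) = (x1 * a + x2 * c, x1 * b + x2 * d)" for x1 x2
  proof -
    have "(x1, x2) = vadd (vscale x1 e1) (vscale x2 e2)"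
      by (simp add: vadd_def vscale_def e1_def e2_def)
    then have "f (x1, x2) = vadd (f (vscale x1 e1)) (f (vscale x2 e2))" using add by metis
    then show ?thesis using sc fe1 fe2 by (simp add: vadd_def vscale_def)
  qed
  have m12: "f (A3_mult \<alpha> e1 e2) = A3_mult \<alpha>' (f e1) (f e2)" by (rule mu)
  have m11: "f (A3_mult \<alpha> e1 e1) = A3_mult \<alpha>' (f e1) (f e1)" by (rule mu)
  have m22: "f (A3_mult \<alpha> e2 e2) = A3_mult \<alpha>' (f e2) (f e2)" by (rule mu)
  from m12 have "f (0,0) = A3_mult \<alpha>' (a,b) (c,d)" by (simp only: A3_basis fe1 fe2)
  then have h1: "a * c + \<alpha>' * (b * d) = 0" "b * d = 0"
    by (auto simp: lin A3_mult_def evo2_mult_def algebra_simps)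
  from m11 have "(a,b) = A3_mult \<alpha>' (a,b) (a,b)" by (simp only: A3_basis fe1)
  then have h2: "a * a + \<alpha>' * (b * b) = a" "b * b = b"
    by (auto simp: A3_mult_def evo2_mult_def algebra_simps)
  from m22 have "f (vadd (vscale \<alpha> e1) e2) = A3_mult \<alpha>' (c,d) (c,d)" by (simp only: A3_basis fe2)
  then have h3: "c * c + \<alpha>' * (d * d) = \<alpha> * a + c" "d * d = \<alpha> * b + d"
    by (auto simp: vadd_def vscale_def e1_def e2_def lin
        A3_mult_def evo2_mult_def algebra_simps)
  have b0: "b = 0"
  proof (rule ccontr)
    assume "b \<noteq> 0"
    then have "d = 0" using h1(2) by simp
    moreover have "b = 1" using h2(2) \<open>b \<noteq> 0\<close>
      by (metis mult_cancel_right2)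
    ultimately show False using h3(2) assms(1) by simp
  qed
  have d1: "d = 1"
  proof (rule ccontr)
    assume "d \<noteq> 1"
    then have "d = 0" using h3(2) b0
      by (metis add_0 mult_cancel_right2 mult_zero_right)
    then have "\<forall>x. snd (f x) = 0" using b0 lin by (metis prod.collapse mult_zero_right add_0 snd_conv)
    moreover have "(0::'k, 1::'k) \<in> range f" using bij bij_is_surj by (metis UNIV_I)
    ultimately show False by (metis imageE snd_conv zero_neq_one)
  qed
  have a1: "a = 1"
  proof (rule ccontr)
    assume "a \<noteq> 1"
    then have "a = 0" using h2(1) b0
      by (metis add_0 mult_cancel_right2 mult_zero_right add.right_neutral)
    then have "f e1 = f (0,0)" using fe1 b0 lin by simp
    moreover have "e1 \<noteq> (0::'k, 0::'k)" by (simp add: e1_def)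
    ultimately show False using bij bij_is_inj by (metis injD)
  qed
  have "c = 0" using h1(1) a1 b0 by simp
  then show "\<alpha> = \<alpha>'" using h3(1) a1 d1 by simp
qed

end
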